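(* Any rule defined on $\mathcal{E}_{\mathcal{SP}}$ that satisfies own-peak-onliness, peak responsiveness, and not obvious manipulability (NOM) meets the equal division guarantee.
   Context: Let $N=\{1,\dots,n\}$ be a finite set of agents. A preference $R_i$ is a continuous complete preorder on $\mathbb{R}_+\cup\{\infty\}$ ($P_i$ strict, $I_i$ indifference); its peak $p(R_i)$ is the set of maximal elements. $R_i$ is single-peaked if $p(R_i)$ is a singleton (identified with its element, possibly $\infty$) and for $x,x'\in\mathbb{R}_+$, $xP_ix'$ whenever $x'<x\le p(R_i)$ or $p(R_i)\le x<x'$; $\mathcal{SP}$ is the set of these. An economy is $(R,\Omega)$, $R\in\mathcal{SP}^n$, $\Omega>0$; $\mathcal{E}_{\mathcal{SP}}$ is the set of economies; a rule is a map $\varphi:\mathcal{E}_{\mathcal{SP}}\to\mathbb{R}^n_+$ with $\sum_j\varphi_j(R,\Omega)=\Omega$. Own-peak-onliness: $p(R_i')=p(R_i)$ implies $\varphi_i(R,\Omega)=\varphi_i(R_i',R_{-i},\Omega)$. Peak responsiveness: for $i\ne j$, $p(R_i)\le p(R_j)$ implies $\varphi_i(R,\Omega)\le\varphi_j(R,\Omega)$. Equal division guarantee: $p(R_i)=\Omega/n$ implies $\varphi_i(R,\Omega)I_i\Omega/n$. Option set $O^\varphi(R_i,\Omega)=\{\varphi_i(R_i,R_{-i},\Omega):R_{-i}\in\mathcal{SP}^{n-1}\}$; $R_i'$ is a manipulation at $(R_i,\Omega)$ if $\varphi_i(R_i',R_{-i},\Omega)P_i\varphi_i(R_i,R_{-i},\Omega)$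 for some $R_{-i}$, and an obvious manipulation if moreover each $x'\in O^\varphi(R_i',\Omega)$ satisfies $x'P_ix$ for some $x\in O^\varphi(R_i,\Omega)$; NOM means no obvious manipulation exists. *)

theory Defs
  imports "HOL-Analysis.Analysis" "HOL-Library.Extended_Nonnegative_Real"
begin

text \<open>The consumption space R_+ \<union> {\<infinity>} is modelled by ennreal = [0,\<infinity>] with its order topology.
  A preference is a binary relation R x y meaning "x R y" (x is weakly preferred to y).
  Agents form a finite type 'n (N = UNIV, n = CARD('n)).\<close>

type_synonym pref = "ennreal \<Rightarrow> ennreal \<Rightarrow> bool"

definition strict_pref :: "pref \<Rightarrow> ennreal \<Rightarrow> ennreal \<Rightarrow> bool" where
  "strict_pref R x y \<longleftrightarrow> R x y \<and> \<not> R y x"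

definition indiff :: "pref \<Rightarrow> ennreal \<Rightarrow> ennreal \<Rightarrow> bool" where
  "indiff R x y \<longleftrightarrow> R x y \<and> R y x"

definition continuous_complete_preorder :: "pref \<Rightarrow> bool" where
  "continuous_complete_preorder R \<longleftrightarrow>
     (\<forall>x y. R x y \<or> R y x) \<and>
     (\<forall>x y z. R x y \<longrightarrow> R y z \<longrightarrow> R x z) \<and>
     (\<forall>x. closed {y. R y x}) \<and> (\<forall>x. closed {y. R x y})"

definition peak :: "pref \<Rightarrow> ennreal set" where
  "peak R = {x. \<forall>y. R x y}"

definition single_peaked :: "pref \<Rightarrow> bool" where
  "single_peaked R \<longleftrightarrow> continuous_complete_preorder R \<and>
     (\<exists>p. peak R = {p} \<and>
        (\<forall>x x' :: real. 0 \<le> x \<longrightarrow> 0 \<le> x' \<longrightarrow>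
           ((x' < x \<and> ennreal x \<le> p) \<or> (p \<le> ennreal x \<and> x < x')) \<longrightarrow>
           strict_pref R (ennreal x) (ennreal x')))"

definition SP :: "pref set" where
  "SP = {R. single_peaked R}"

definition the_peak :: "pref \<Rightarrow> ennreal" where
  "the_peak R = (THE p. peak R = {p})"

type_synonym 'n rule = "('n \<Rightarrow> pref) \<Rightarrow> real \<Rightarrow> 'n \<Rightarrow> real"

definition is_rule :: "('n::finite) rule \<Rightarrow> bool" where
  "is_rule \<phi> \<longleftrightarrow> (\<forall>R \<Omega>. (\<forall>i. R i \<in> SP) \<longrightarrow> \<Omega> > 0 \<longrightarrow>
      (\<forall>i. \<phi> R \<Omega> i \<ge> 0) \<and> (\<Sum>i\<in>UNIV. \<phi> R \<Omega> i) = \<Omega>)"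

definition own_peak_only :: "('n::finite) rule \<Rightarrow> bool" where
  "own_peak_only \<phi> \<longleftrightarrow> (\<forall>R \<Omega> i Ri'. (\<forall>j. R j \<in> SP) \<longrightarrow> \<Omega> > 0 \<longrightarrow> Ri' \<in> SP \<longrightarrow>
      peak Ri' = peak (R i) \<longrightarrow> \<phi> R \<Omega> i = \<phi> (R(i := Ri')) \<Omega> i)"

definition peak_responsive :: "('n::finite) rule \<Rightarrow> bool" where
  "peak_responsive \<phi> \<longleftrightarrow> (\<forall>R \<Omega> i j. (\<forall>k. R k \<in> SP) \<longrightarrow> \<Omega> > 0 \<longrightarrow> i \<noteq> j \<longrightarrow>
      the_peak (R i) \<le> the_peak (R j) \<longrightarrow> \<phi> R \<Omega> i \<le> \<phi> R \<Omega> j)"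

definition equal_division_guarantee :: "('n::finite) rule \<Rightarrow> bool" where
  "equal_division_guarantee \<phi> \<longleftrightarrow> (\<forall>R \<Omega> i. (\<forall>k. R k \<in> SP) \<longrightarrow> \<Omega> > 0 \<longrightarrow>
      the_peak (R i) = ennreal (\<Omega> / real CARD('n)) \<longrightarrow>
      indiff (R i) (ennreal (\<phi> R \<Omega> i)) (ennreal (\<Omega> / real CARD('n))))"

definition option_set :: "('n::finite) rule \<Rightarrow> 'n \<Rightarrow> pref \<Rightarrow> real \<Rightarrow> real set" where
  "option_set \<phi> i Ri \<Omega> = {\<phi> (R(i := Ri)) \<Omega> i | R. \<forall>j. j \<noteq> i \<longrightarrow> R j \<in> SP}"

definition manipulation :: "('n::finite) rule \<Rightarrow> 'n \<Rightarrow> pref \<Rightarrow> pref \<Rightarrow> real \<Rightarrow> bool" where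
  "manipulation \<phi> i Ri Ri' \<Omega> \<longleftrightarrow> (\<exists>R. (\<forall>j. j \<noteq> i \<longrightarrow> R j \<in> SP) \<and>
      strict_pref Ri (ennreal (\<phi> (R(i := Ri')) \<Omega> i)) (ennreal (\<phi> (R(i := Ri)) \<Omega> i)))"

definition obvious_manipulation :: "('n::finite) rule \<Rightarrow> 'n \<Rightarrow> pref \<Rightarrow> pref \<Rightarrow> real \<Rightarrow> bool" where
  "obvious_manipulation \<phi> i Ri Ri' \<Omega> \<longleftrightarrow> manipulation \<phi> i Ri Ri' \<Omega> \<and>
      (\<forall>x'\<in>option_set \<phi> i Ri' \<Omega>. \<exists>x\<in>option_set \<phi> i Ri \<Omega>.
          strict_pref Ri (ennreal x') (ennreal x))"

definition NOM :: "('n::finite) rule \<Rightarrow> bool" where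
  "NOM \<phi> \<longleftrightarrow> (\<forall>i Ri Ri' \<Omega>. Ri \<in> SP \<longrightarrow> Ri' \<in> SP \<longrightarrow> \<Omega> > 0 \<longrightarrow>
      \<not> obvious_manipulation \<phi> i Ri Ri' \<Omega>)"

end

theory Submission
  imports Defs
begin

definition dfun :: "real \<Rightarrow> real \<Rightarrow> ennreal \<Rightarrow> ennreal" where
  "dfun P k y = (ennreal P - y) + ennreal k * (y - ennreal P)"

definition Dr :: "real \<Rightarrow> real \<Rightarrow> real \<Rightarrow> real" where
  "Dr P k Y = max 0 (P - Y) + k * max 0 (Y - P)"

definition dpref :: "real \<Rightarrow> real \<Rightarrow> pref" where
  "dpref P k = (\<lambda>a b. dfun P k a \<le> dfun P k b)"

lemma dfun_cont: "k > 0 \<Longrightarrow> continuous_on UNIV (dfun P k)"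
  unfolding continuous_on_def dfun_def
  by (auto intro!: tendsto_intros)

lemma ccp_util: "continuous_on UNIV (u::ennreal \<Rightarrow> ennreal) \<Longrightarrow>
   continuous_complete_preorder (\<lambda>a b. u a \<le> u b)"
  unfolding continuous_complete_preorder_def
  by (auto intro!: closed_Collect_le continuous_on_const)

lemma dfun_real: "P \<ge> 0 \<Longrightarrow> Y \<ge> 0 \<Longrightarrow> k \<ge> 0 \<Longrightarrow> dfun P k (ennreal Y) = ennreal (Dr P k Y)"
  unfolding dfun_def Dr_def
  apply (cases "Y \<le> P")
   apply (simp add: ennreal_minus ennreal_neg ennreal_plus[symmetric] ennreal_mult[symmetric])
  apply (simp add: ennreal_minus ennreal_neg ennreal_plus[symmetric] ennreal_mult[symmetric])
  done

lemma dfun_top: "k > 0 \<Longrightarrow> dfun P k top = top"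
  unfolding dfun_def by (simp add: ennreal_mult_top)

lemma Dr_zero: "Dr P k P = 0" by (simp add: Dr_def)

lemma Dr_pos: "k > 0 \<Longrightarrow> Y \<noteq> P \<Longrightarrow> Dr P k Y > 0"
  unfolding Dr_def by (cases "Y < P") (auto simp: max_def)

lemma Dr_strict: "k > 0 \<Longrightarrow> (x' < x \<and> x \<le> P) \<or> (P \<le> x \<and> x < x') \<Longrightarrow> Dr P k x < Dr P k x'"
  unfolding Dr_def by (auto simp: max_def mult_strict_left_mono)

lemma dfun_zero_iff:
  assumes "P \<ge> 0" "k > 0" shows "dfun P k y = 0 \<longleftrightarrow> y = ennreal P"
proof (cases y)
  case (real Y)
  then show ?thesis using assms dfun_real[of P Y k] Dr_pos[of k Y P] Dr_zero[of P k]
    by (auto simp: ennreal_eq_0_iff) (metis ennreal_inj order_less_le)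
next
  case top
  then show ?thesis using assms dfun_top by auto
qed

lemma dpref_SP:
  assumes "P \<ge> 0" "k > 0"
  shows "dpref P k \<in> SP" and "peak (dpref P k) = {ennreal P}"
proof -
  have pk: "peak (dpref P k) = {ennreal P}"
    unfolding peak_def dpref_def using dfun_zero_iff[OF assms]
  proof (auto)
    fix b show "dfun P k (ennreal P) \<le> dfun P k b" using dfun_zero_iff[OF assms, of "ennreal P"] by simp
  qed (metis dfun_zero_iff[OF assms] le_zero_eq)
  show "peak (dpref P k) = {ennreal P}" by (rule pk)
  show "dpref P k \<in> SP"
    unfolding SP_def single_peaked_def
  proof (intro CollectI conjI exI)
    show "continuous_complete_preorder (dpref P k)"
      unfolding dpref_def by (rule ccp_util[OF dfun_cont[OF assms(2)]])
    show "peak (dpref P k) = {ennreal P}" by (rule pk)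
    show "\<forall>x x'. 0 \<le> x \<longrightarrow> 0 \<le> x' \<longrightarrow> (x' < x \<and> ennreal x \<le> ennreal P \<or> ennreal P \<le> ennreal x \<and> x < x') \<longrightarrow>
        strict_pref (dpref P k) (ennreal x) (ennreal x')"
    proof (intro allI impI)
      fix x x' :: real assume h: "0 \<le> x" "0 \<le> x'" "x' < x \<and> ennreal x \<le> ennreal P \<or> ennreal P \<le> ennreal x \<and> x < x'"
      then have "(x' < x \<and> x \<le> P) \<or> (P \<le> x \<and> x < x')" using assms by (auto simp: ennreal_le_iff)
      then have "Dr P k x < Dr P k x'" using Dr_strict assms by blast
      moreover have "Dr P k x \<ge> 0" using assms unfolding Dr_def by auto
      ultimately show "strict_pref (dpref P k) (ennreal x) (ennreal x')"
        unfolding strict_pref_def dpref_def using dfun_real assms h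
        by (auto simp: ennreal_le_iff ennreal_less_iff)
    qed
  qed
qed

definition R0 :: pref where "R0 = (\<lambda>a b. a \<le> b)"
definition Rtop :: pref where "Rtop = (\<lambda>a b. b \<le> a)"

lemma R0_SP: "R0 \<in> SP" and R0_peak: "peak R0 = {0}"
proof -
  have pk: "peak R0 = {0}" unfolding peak_def R0_def by (auto intro: antisym)
  show "peak R0 = {0}" by (rule pk)
  have c: "continuous_complete_preorder R0"
    unfolding R0_def using ccp_util[of id] by (simp add: continuous_on_id)
  show "R0 \<in> SP" unfolding SP_def single_peaked_def
    using c pk by (auto simp: strict_pref_def R0_def ennreal_le_iff ennreal_less_iff)
qed

lemma Rtop_SP: "Rtop \<in> SP" and Rtop_peak: "peak Rtop = {top}"
proof -
  have pk: "peak Rtop = {top}" unfolding peak_def Rtop_def by (auto intro: antisym)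
  show "peak Rtop = {top}" by (rule pk)
  have e1: "{y. x \<le> y} = {x..}" for x :: ennreal by auto
  have e2: "{y. y \<le> x} = {..x}" for x :: ennreal by auto
  have c: "continuous_complete_preorder Rtop"
    unfolding Rtop_def continuous_complete_preorder_def
    by (auto simp: e1 e2)
  show "Rtop \<in> SP" unfolding SP_def single_peaked_def
    using c pk by (auto simp: strict_pref_def Rtop_def ennreal_le_iff ennreal_less_iff top_unique)
qed

lemma the_peakI: "peak R = {p} \<Longrightarrow> the_peak R = p"
  unfolding the_peak_def by auto

lemma peak_the_peak: "R \<in> SP \<Longrightarrow> peak R = {the_peak R}"
  unfolding SP_def single_peaked_def using the_peakI by force

lemma lower_bound:
  fixes \<phi> :: "('n::finite) rule"
  assumes "is_rule \<phi>" "peak_responsive \<phi>" "\<forall>k. R k \<in> SP" "\<Omega> > 0" "the_peak (R i) = top"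
  shows "\<phi> R \<Omega> i \<ge> \<Omega> / real CARD('n)"
proof -
  have le: "\<phi> R \<Omega> j \<le> \<phi> R \<Omega> i" for j
  proof (cases "j = i")
    case False
    then show ?thesis using assms(2-5) unfolding peak_responsive_def by auto
  qed simp
  have "\<Omega> = (\<Sum>j\<in>UNIV. \<phi> R \<Omega> j)" using assms(1,3,4) unfolding is_rule_def by auto
  also have "\<dots> \<le> (\<Sum>j\<in>(UNIV::'n set). \<phi> R \<Omega> i)" by (rule sum_mono) (use le in auto)
  also have "\<dots> = real CARD('n) * \<phi> R \<Omega> i" by simp
  finally show ?thesis by (simp add: divide_le_eq mult.commute)
qed

lemma upper_bound:
  fixes \<phi> :: "('n::finite) rule"
  assumes "is_rule \<phi>" "peak_responsive \<phi>" "\<forall>k. R k \<in> SP" "\<Omega> > 0" "the_peak (R i) = 0"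
  shows "\<phi> R \<Omega> i \<le> \<Omega> / real CARD('n)"
proof -
  have le: "\<phi> R \<Omega> i \<le> \<phi> R \<Omega> j" for j
  proof (cases "j = i")
    case False
    then show ?thesis using assms(2-5) unfolding peak_responsive_def by auto
  qed simp
  have "real CARD('n) * \<phi> R \<Omega> i = (\<Sum>j\<in>(UNIV::'n set). \<phi> R \<Omega> i)" by simp
  also have "\<dots> \<le> (\<Sum>j\<in>UNIV. \<phi> R \<Omega> j)" by (rule sum_mono) (use le in auto)
  also have "\<dots> = \<Omega>" using assms(1,3,4) unfolding is_rule_def by auto
  finally show ?thesis by (simp add: le_divide_eq mult.commute)
qed

lemma bounds01:
  fixes \<phi> :: "('n::finite) rule"
  assumes "is_rule \<phi>" "\<forall>k. R k \<in> SP" "\<Omega> > 0"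
  shows "0 \<le> \<phi> R \<Omega> i" "\<phi> R \<Omega> i \<le> \<Omega>"
proof -
  have nn: "\<forall>j. 0 \<le> \<phi> R \<Omega> j" and s: "(\<Sum>j\<in>UNIV. \<phi> R \<Omega> j) = \<Omega>"
    using assms unfolding is_rule_def by auto
  show "0 \<le> \<phi> R \<Omega> i" using nn by auto
  show "\<phi> R \<Omega> i \<le> \<Omega>" using member_le_sum[of i UNIV "\<phi> R \<Omega>"] nn s by auto
qed

lemma dpref_strict:
  assumes "P \<ge> 0" "k > 0" "a \<ge> 0" "b \<ge> 0" "Dr P k a < Dr P k b"
  shows "strict_pref (dpref P k) (ennreal a) (ennreal b)"
proof -
  have "Dr P k a \<ge> 0" using assms unfolding Dr_def by auto
  then show ?thesis unfolding strict_pref_def dpref_def using dfun_real assms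
    by (auto simp: ennreal_le_iff ennreal_less_iff)
qed

theorem lemma2:
  fixes \<phi> :: "('n::finite) rule"
  assumes "is_rule \<phi>"
    and "own_peak_only \<phi>"
    and "peak_responsive \<phi>"
    and "NOM \<phi>"
  shows "equal_division_guarantee \<phi>"
  unfolding equal_division_guarantee_def
proof (intro allI impI)
  fix R :: "'n \<Rightarrow> pref" and \<Omega> :: real and i :: 'n
  assume SPR: "\<forall>k. R k \<in> SP" and \<Omega>: "\<Omega> > 0"
    and pk: "the_peak (R i) = ennreal (\<Omega> / real CARD('n))"
  define P where "P = \<Omega> / real CARD('n)"
  have P: "P > 0" unfolding P_def using \<Omega> by auto
  have pkR: "peak (R i) = {ennreal P}" using peak_the_peak[of "R i"] SPR pk P_def by auto
  define x where "x = \<phi> R \<Omega> i"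
  have x0: "0 \<le> x" "x \<le> \<Omega>" using bounds01[OF assms(1) SPR \<Omega>] x_def by auto
  have SPupd: "\<forall>k. (R'(i := Q)) k \<in> SP" if "\<forall>j. j \<noteq> i \<longrightarrow> R' j \<in> SP" "Q \<in> SP" for R' Q
    using that by auto
  have opo: "\<phi> (R(i := Q)) \<Omega> i = x" if "Q \<in> SP" "peak Q = {ennreal P}" for Q
    using assms(2) SPR \<Omega> that pkR unfolding own_peak_only_def x_def by metis
  have "x = P"
  proof (rule ccontr)
    assume ne: "x \<noteq> P"
    show False
    proof (cases "x < P")
      case True
      define k where "k = (P - x) / (2 * \<Omega>)"
      have k: "k > 0" unfolding k_def using True \<Omega> by auto
      have sp: "strict_pref (dpref P k) (ennreal y) (ennreal x)" if "P \<le> y" "y \<le> \<Omega>" for y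
      proof (rule dpref_strict[OF _ k])
        have "Dr P k y = k * (y - P)" unfolding Dr_def using that by auto
        also have "\<dots> \<le> k * \<Omega>" using k that P by (intro mult_left_mono) auto
        also have "\<dots> = (P - x) / 2" unfolding k_def using \<Omega> by auto
        also have "\<dots> < Dr P k x" unfolding Dr_def using True by auto
        finally show "Dr P k y < Dr P k x" .
      qed (use P that x0 in auto)
      have opt: "P \<le> \<phi> (R'(i := Rtop)) \<Omega> i \<and> \<phi> (R'(i := Rtop)) \<Omega> i \<le> \<Omega>"
        if "\<forall>j. j \<noteq> i \<longrightarrow> R' j \<in> SP" for R'
        using lower_bound[OF assms(1,3) SPupd[OF that Rtop_SP] \<Omega>, of i]
          bounds01[OF assms(1) SPupd[OF that Rtop_SP] \<Omega>, of i]
          the_peakI[OF Rtop_peak] unfolding P_def by (auto simp: fun_upd_def)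
      have xin: "x \<in> option_set \<phi> i (dpref P k) \<Omega>"
        unfolding option_set_def using opo[OF dpref_SP[OF _ k]] P SPR
        by (auto intro!: exI[of _ R])
      have "obvious_manipulation \<phi> i (dpref P k) Rtop \<Omega>"
        unfolding obvious_manipulation_def manipulation_def
      proof (intro conjI ballI)
        show "\<exists>R'. (\<forall>j. j \<noteq> i \<longrightarrow> R' j \<in> SP) \<and>
          strict_pref (dpref P k) (ennreal (\<phi> (R'(i := Rtop)) \<Omega> i)) (ennreal (\<phi> (R'(i := dpref P k)) \<Omega> i))"
          using opo[OF dpref_SP[OF _ k]] P SPR sp opt[of R] by (auto intro!: exI[of _ R])
      next
        fix x' assume "x' \<in> option_set \<phi> i Rtop \<Omega>"
        then obtain R' where "\<forall>j. j \<noteq> i \<longrightarrow> R' j \<in> SP" "x' = \<phi> (R'(i := Rtop)) \<Omega> i"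
          unfolding option_set_def by auto
        then show "\<exists>x\<in>option_set \<phi> i (dpref P k) \<Omega>. strict_pref (dpref P k) (ennreal x') (ennreal x)"
          using xin sp opt by blast
      qed
      then show False using assms(4) dpref_SP[OF _ k] Rtop_SP P \<Omega> unfolding NOM_def by auto
    next
      case False
      then have gt: "x > P" using ne by auto
      define k where "k = 2 * P / (x - P)"
      have k: "k > 0" unfolding k_def using gt P by auto
      have sp: "strict_pref (dpref P k) (ennreal y) (ennreal x)" if "0 \<le> y" "y \<le> P" for y
      proof (rule dpref_strict[OF _ k])
        have "Dr P k y = P - y" unfolding Dr_def using that by auto
        also have "\<dots> < 2 * P" using that P by auto
        also have "\<dots> = k * (x - P)" unfolding k_def using gt by auto
        also have "\<dots> = Dr P k x" unfolding Dr_def using gt by auto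
        finally show "Dr P k y < Dr P k x" .
      qed (use P that x0 in auto)
      have opt: "0 \<le> \<phi> (R'(i := R0)) \<Omega> i \<and> \<phi> (R'(i := R0)) \<Omega> i \<le> P"
        if "\<forall>j. j \<noteq> i \<longrightarrow> R' j \<in> SP" for R'
        using upper_bound[OF assms(1,3) SPupd[OF that R0_SP] \<Omega>, of i]
          bounds01[OF assms(1) SPupd[OF that R0_SP] \<Omega>, of i]
          the_peakI[OF R0_peak] unfolding P_def by (auto simp: fun_upd_def)
      have xin: "x \<in> option_set \<phi> i (dpref P k) \<Omega>"
        unfolding option_set_def using opo[OF dpref_SP[OF _ k]] P SPR
        by (auto intro!: exI[of _ R])
      have "obvious_manipulation \<phi> i (dpref P k) R0 \<Omega>"
        unfolding obvious_manipulation_def manipulation_def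
      proof (intro conjI ballI)
        show "\<exists>R'. (\<forall>j. j \<noteq> i \<longrightarrow> R' j \<in> SP) \<and>
          strict_pref (dpref P k) (ennreal (\<phi> (R'(i := R0)) \<Omega> i)) (ennreal (\<phi> (R'(i := dpref P k)) \<Omega> i))"
          using opo[OF dpref_SP[OF _ k]] P SPR sp opt[of R] by (auto intro!: exI[of _ R])
      next
        fix x' assume "x' \<in> option_set \<phi> i R0 \<Omega>"
        then obtain R' where "\<forall>j. j \<noteq> i \<longrightarrow> R' j \<in> SP" "x' = \<phi> (R'(i := R0)) \<Omega> i"
          unfolding option_set_def by auto
        then show "\<exists>x\<in>option_set \<phi> i (dpref P k) \<Omega>. strict_pref (dpref P k) (ennreal x') (ennreal x)"
          using xin sp opt by blast
      qed
      then show False using assms(4) dpref_SP[OF _ k] R0_SP P \<Omega> unfolding NOM_def by auto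
    qed
  qed
  moreover have "R i a a" for a
    using SPR unfolding SP_def single_peaked_def continuous_complete_preorder_def by blast
  ultimately show "indiff (R i) (ennreal (\<phi> R \<Omega> i)) (ennreal (\<Omega> / real CARD('n)))"
    unfolding indiff_def x_def P_def by auto
qed

end
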